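(* Let $G$ be a directed graph with vertices $s,t$ and $k\ge1$. The function $\hat d_{\mathrm{sum}}:U^k_{\mathrm{lr}}\to\mathbb N$, $\hat d_{\mathrm{sum}}(C)=\sum_{e\in E_{\mathrm{shr}}(C)}\binom{\mu_e(C)}{2}$, is submodular on the lattice $L^*$, i.e. $\hat d_{\mathrm{sum}}(C_1\vee C_2)+\hat d_{\mathrm{sum}}(C_1\wedge C_2)\le\hat d_{\mathrm{sum}}(C_1)+\hat d_{\mathrm{sum}}(C_2)$ for all $C_1,C_2\in L^*$.
   Context: An $s$-$t$ cut of a directed graph $G$ is a set $X\subseteq E(G)$ such that removing $X$ leaves no directed $s$-$t$ path; $\Gamma_G(s,t)$ is the set of $s$-$t$ cuts of minimum cardinality. Fix a maximum-size collection $\mathcal P$ of pairwise edge-disjoint directed $s$-$t$ paths (each minimum $s$-$t$ cut contains exactly one edge of each path in $\mathcal P$). For $X,Y\in\Gamma_G(s,t)$, $S_{\min}(X\cup Y)$ (resp. $S_{\max}(X\cup Y)$) consists, for each $p\in\mathcal P$, of the edge of $(X\cup Y)\cap p$ occurring first (resp. last) along $p$. $X\le Y$ means every directed $s$-$t$ path meets an edge of $X$ at or before an edge of $Y$. $U^k_{\mathrm{lr}}$ is the set of $k$-tuples $[X_1,\dots,X_k]$ of elements of $\Gamma_G(s,t)$ with $X_i\le X_j$ for all $i<j$. $L^*$ is the lattice on $U^k_{\mathrm{lr}}$ with componentwise order, join $[X_i]_i\vee[Y_i]_i=[S_{\max}(X_i\cup Y_i)]_i$ and meet $[X_i]_i\wedge[Y_i]_i=[S_{\min}(X_i\cup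 Y_i)]_i$. For $C=[X_1,\dots,X_k]$, $\mu_e(C)$ is the number of indices $i$ with $e\in X_i$, and $E_{\mathrm{shr}}(C)=\{e\in E(G):\mu_e(C)\ge2\}$. *)

theory Defs
  imports Main
begin

definition is_path :: "'e set \<Rightarrow> ('e \<Rightarrow> 'v) \<Rightarrow> ('e \<Rightarrow> 'v) \<Rightarrow> 'v \<Rightarrow> 'v \<Rightarrow> 'e list \<Rightarrow> bool" where
  "is_path E src dst s t p \<longleftrightarrow>
     p \<noteq> [] \<and> set p \<subseteq> E \<and> src (hd p) = s \<and> dst (last p) = t \<and>
     (\<forall>i. Suc i < length p \<longrightarrow> dst (p ! i) = src (p ! Suc i)) \<and>
     distinct (map src p @ [t])"

definition is_cut :: "'e set \<Rightarrow> ('e \<Rightarrow> 'v) \<Rightarrow> ('e \<Rightarrow> 'v) \<Rightarrow> 'v \<Rightarrow> 'v \<Rightarrow> 'e set \<Rightarrow> bool" where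
  "is_cut E src dst s t X \<longleftrightarrow> X \<subseteq> E \<and>
     (\<forall>p. is_path E src dst s t p \<longrightarrow> set p \<inter> X \<noteq> {})"

definition min_cuts :: "'e set \<Rightarrow> ('e \<Rightarrow> 'v) \<Rightarrow> ('e \<Rightarrow> 'v) \<Rightarrow> 'v \<Rightarrow> 'v \<Rightarrow> 'e set set" where
  "min_cuts E src dst s t = {X. is_cut E src dst s t X \<and>
     (\<forall>Y. is_cut E src dst s t Y \<longrightarrow> card X \<le> card Y)}"

definition edge_disjoint_paths :: "'e set \<Rightarrow> ('e \<Rightarrow> 'v) \<Rightarrow> ('e \<Rightarrow> 'v) \<Rightarrow> 'v \<Rightarrow> 'v \<Rightarrow> 'e list set \<Rightarrow> bool" where
  "edge_disjoint_paths E src dst s t P \<longleftrightarrow>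
     (\<forall>p\<in>P. is_path E src dst s t p) \<and>
     (\<forall>p\<in>P. \<forall>q\<in>P. p \<noteq> q \<longrightarrow> set p \<inter> set q = {})"

definition max_disjoint_paths :: "'e set \<Rightarrow> ('e \<Rightarrow> 'v) \<Rightarrow> ('e \<Rightarrow> 'v) \<Rightarrow> 'v \<Rightarrow> 'v \<Rightarrow> 'e list set \<Rightarrow> bool" where
  "max_disjoint_paths E src dst s t P \<longleftrightarrow> finite P \<and> edge_disjoint_paths E src dst s t P \<and>
     (\<forall>Q. finite Q \<and> edge_disjoint_paths E src dst s t Q \<longrightarrow> card Q \<le> card P)"

definition S_min :: "'e list set \<Rightarrow> 'e set \<Rightarrow> 'e set" where
  "S_min P Z = (\<lambda>p. hd (filter (\<lambda>e. e \<in> Z) p)) ` P"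

definition S_max :: "'e list set \<Rightarrow> 'e set \<Rightarrow> 'e set" where
  "S_max P Z = (\<lambda>p. last (filter (\<lambda>e. e \<in> Z) p)) ` P"

definition cut_le :: "'e set \<Rightarrow> ('e \<Rightarrow> 'v) \<Rightarrow> ('e \<Rightarrow> 'v) \<Rightarrow> 'v \<Rightarrow> 'v \<Rightarrow> 'e set \<Rightarrow> 'e set \<Rightarrow> bool" where
  "cut_le E src dst s t X Y \<longleftrightarrow>
     (\<forall>p. is_path E src dst s t p \<longrightarrow>
        (\<exists>i j. i \<le> j \<and> j < length p \<and> p ! i \<in> X \<and> p ! j \<in> Y))"

definition U_lr :: "'e set \<Rightarrow> ('e \<Rightarrow> 'v) \<Rightarrow> ('e \<Rightarrow> 'v) \<Rightarrow> 'v \<Rightarrow> 'v \<Rightarrow> nat \<Rightarrow> 'e set list set" where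
  "U_lr E src dst s t k = {C. length C = k \<and> (\<forall>i<k. C ! i \<in> min_cuts E src dst s t) \<and>
     (\<forall>i j. i < j \<and> j < k \<longrightarrow> cut_le E src dst s t (C ! i) (C ! j))}"

definition tuple_join :: "'e list set \<Rightarrow> 'e set list \<Rightarrow> 'e set list \<Rightarrow> 'e set list" where
  "tuple_join P C D = map2 (\<lambda>X Y. S_max P (X \<union> Y)) C D"

definition tuple_meet :: "'e list set \<Rightarrow> 'e set list \<Rightarrow> 'e set list \<Rightarrow> 'e set list" where
  "tuple_meet P C D = map2 (\<lambda>X Y. S_min P (X \<union> Y)) C D"

definition mult :: "'e set list \<Rightarrow> 'e \<Rightarrow> nat" where
  "mult C e = length (filter (\<lambda>X. e \<in> X) C)"

definition E_shr :: "'e set \<Rightarrow> 'e set list \<Rightarrow> 'e set" where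
  "E_shr E C = {e \<in> E. mult C e \<ge> 2}"

definition d_sum :: "'e set \<Rightarrow> 'e set list \<Rightarrow> nat" where
  "d_sum E C = (\<Sum>e\<in>E_shr E C. mult C e choose 2)"

end

theory Submission
  imports Defs
begin


fun gwk :: "('a \<Rightarrow> bool) \<Rightarrow> ('a \<Rightarrow> 'v) \<Rightarrow> ('a \<Rightarrow> 'v) \<Rightarrow> 'v \<Rightarrow> 'a list \<Rightarrow> 'v \<Rightarrow> bool" where
  "gwk ok fr tg u [] v = (u = v)"
| "gwk ok fr tg u (a # p) v = (ok a \<and> fr a = u \<and> gwk ok fr tg (tg a) p v)"

lemma gwk_append: "gwk ok fr tg u (p @ q) v \<longleftrightarrow> (\<exists>w. gwk ok fr tg u p w \<and> gwk ok fr tg w q v)"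
  by (induct p arbitrary: u) auto

lemma gwk_snoc: "gwk ok fr tg u (p @ [a]) v \<longleftrightarrow> gwk ok fr tg u p (fr a) \<and> ok a \<and> tg a = v"
  by (auto simp: gwk_append)

lemma gwk_cross: "gwk ok fr tg u p v \<Longrightarrow> Q u \<Longrightarrow> \<not> Q v \<Longrightarrow> \<exists>x\<in>set p. Q (fr x) \<and> \<not> Q (tg x)"
  by (induct p arbitrary: u) auto

lemma gwk_mono: "gwk ok fr tg u p v \<Longrightarrow> (\<And>x. ok x \<Longrightarrow> ok' x) \<Longrightarrow> gwk ok' fr tg u p v"
  by (induct p arbitrary: u) auto

lemma gwk_ok: "gwk ok fr tg u p v \<Longrightarrow> x \<in> set p \<Longrightarrow> ok x"
  by (induct p arbitrary: u) auto

lemma gwk_short: "gwk ok fr tg u p v \<Longrightarrow> \<exists>q. gwk ok fr tg u q v \<and> distinct (map fr q @ [v]) \<and> set q \<subseteq> set p"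
proof (induct p arbitrary: u)
  case Nil
  then show ?case by auto
next
  case (Cons a p)
  then have a: "ok a" "fr a = u" "gwk ok fr tg (tg a) p v" by auto
  from Cons(1)[OF a(3)] obtain q where q: "gwk ok fr tg (tg a) q v" "distinct (map fr q @ [v])" "set q \<subseteq> set p" by blast
  show ?case
  proof (cases "u \<in> set (map fr q @ [v])")
    case True
    show ?thesis
    proof (cases "u = v")
      case True
      then show ?thesis by (intro exI[of _ "[]"]) auto
    next
      case False
      with True obtain b where b: "b \<in> set q" "fr b = u" by auto
      then obtain q1 q2 where qs: "q = q1 @ b # q2" by (meson split_list)
      from q(1) qs have "gwk ok fr tg u (b # q2) v" using b by (auto simp: gwk_append)
      moreover have "distinct (map fr (b # q2) @ [v])" using q(2) qs by auto
      moreover have "set (b # q2) \<subseteq> set (a # p)" using q(3) qs by auto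
      ultimately show ?thesis by blast
    qed
  next
    case False
    then show ?thesis using a q by (intro exI[of _ "a # q"]) auto
  qed
qed

lemma chain_Cons: "(\<forall>i. Suc i < length (a # p) \<longrightarrow> tg ((a # p) ! i) = fr ((a # p) ! Suc i)) \<longleftrightarrow>
   (p \<noteq> [] \<longrightarrow> tg a = fr (hd p)) \<and> (\<forall>i. Suc i < length p \<longrightarrow> tg (p ! i) = fr (p ! Suc i))"
  apply (cases p)
   apply simp
  apply (auto simp: nth_Cons split: nat.splits)
  done

lemma gwk_iff: "p \<noteq> [] \<Longrightarrow> gwk ok fr tg u p v \<longleftrightarrow> (\<forall>x\<in>set p. ok x) \<and> fr (hd p) = u \<and> tg (last p) = v \<and>
   (\<forall>i. Suc i < length p \<longrightarrow> tg (p ! i) = fr (p ! Suc i))"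
proof (induct p arbitrary: u)
  case Nil
  then show ?case by simp
next
  case (Cons a p)
  show ?case
  proof (cases "p = []")
    case True
    then show ?thesis by auto
  next
    case False
    show ?thesis unfolding chain_Cons using Cons(1)[OF False] False by auto
  qed
qed

lemma is_path_gwk: "is_path E src dst s t p \<longleftrightarrow> p \<noteq> [] \<and> gwk (\<lambda>e. e \<in> E) src dst s p t \<and> distinct (map src p @ [t])"
  unfolding is_path_def using gwk_iff[of p "\<lambda>e. e \<in> E" src dst s t] by auto

definition bal :: "('e \<Rightarrow> 'v) \<Rightarrow> ('e \<Rightarrow> 'v) \<Rightarrow> 'e set \<Rightarrow> 'v \<Rightarrow> int" where
  "bal sr ds F x = (\<Sum>e\<in>F. (if sr e = x then 1 else 0) - (if ds e = x then 1 else 0))"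

lemma bal_insert: "finite F \<Longrightarrow> e \<notin> F \<Longrightarrow>
  bal sr ds (insert e F) x = bal sr ds F x + (if sr e = x then 1 else 0) - (if ds e = x then 1 else 0)"
  unfolding bal_def by simp

lemma bal_remove: "finite F \<Longrightarrow> e \<in> F \<Longrightarrow>
  bal sr ds (F - {e}) x = bal sr ds F x - (if sr e = x then 1 else 0) + (if ds e = x then 1 else 0)"
  unfolding bal_def by (simp add: sum_diff1)

lemma bal_diff: "finite F \<Longrightarrow> A \<subseteq> F \<Longrightarrow> bal sr ds (F - A) x = bal sr ds F x - bal sr ds A x"
  unfolding bal_def by (simp add: sum_diff)

lemma bal_empty[simp]: "bal sr ds {} x = 0"
  unfolding bal_def by simp

lemma bal_sumW: "finite F \<Longrightarrow> finite W \<Longrightarrow>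
  (\<Sum>v\<in>W. bal sr ds F v) = (\<Sum>e\<in>F. (if sr e \<in> W then 1 else 0) - (if ds e \<in> W then 1 else 0))"
  unfolding bal_def
  apply (subst sum.swap)
  apply (simp add: sum_subtractf sum.delta')
  done

lemma bal_path: "gwk ok sr ds u p v \<Longrightarrow> distinct (map sr p @ [v]) \<Longrightarrow>
  bal sr ds (set p) x = (if x = u then 1 else 0) - (if x = v then 1 else 0)"
proof (induct p arbitrary: u)
  case Nil
  then show ?case by simp
next
  case (Cons e p)
  have "e \<notin> set p" using Cons(3) by auto
  then show ?case using Cons by (auto simp: bal_insert)
qed




lemma decomp:
  assumes "s \<noteq> t"
  shows "finite F \<Longrightarrow> F \<subseteq> E \<Longrightarrow> (\<forall>x. x \<noteq> s \<longrightarrow> x \<noteq> t \<longrightarrow> bal src dst F x = 0) \<Longrightarrow> int m \<le> bal src dst F s \<Longrightarrow>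
    \<exists>Q. finite Q \<and> card Q = m \<and> (\<forall>q\<in>Q. is_path E src dst s t q \<and> set q \<subseteq> F) \<and>
      (\<forall>p\<in>Q. \<forall>q\<in>Q. p \<noteq> q \<longrightarrow> set p \<inter> set q = {})"
proof (induct m arbitrary: F)
  case 0
  then show ?case by (intro exI[of _ "{}"]) auto
next
  case (Suc m)
  define RF where "RF = {v. \<exists>w. gwk (\<lambda>e. e \<in> F) src dst s w v}"
  have sR: "s \<in> RF" unfolding RF_def by (auto intro: exI[of _ "[]"])
  have clos: "dst e \<in> RF" if "e \<in> F" "src e \<in> RF" for e
  proof -
    from that obtain w where "gwk (\<lambda>e. e \<in> F) src dst s w (src e)" unfolding RF_def by auto
    then have "gwk (\<lambda>e. e \<in> F) src dst s (w @ [e]) (dst e)" using that by (simp add: gwk_snoc)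
    then show ?thesis unfolding RF_def by blast
  qed
  have "t \<in> RF"
  proof (rule ccontr)
    assume tR: "t \<notin> RF"
    define W where "W = RF \<inter> insert s (src ` F \<union> dst ` F)"
    have fW: "finite W" unfolding W_def using Suc(2) by auto
    have sW: "s \<in> W" unfolding W_def using sR by auto
    have "(\<Sum>v\<in>W. bal src dst F v) = bal src dst F s + (\<Sum>v\<in>W - {s}. bal src dst F v)"
      using fW sW by (simp add: sum.remove)
    also have "(\<Sum>v\<in>W - {s}. bal src dst F v) = 0"
      apply (rule sum.neutral)
      using Suc(4) tR unfolding W_def by auto
    finally have e1: "(\<Sum>v\<in>W. bal src dst F v) = bal src dst F s" by simp
    have "(\<Sum>v\<in>W. bal src dst F v) = (\<Sum>e\<in>F. (if src e \<in> W then 1 else 0) - (if dst e \<in> W then 1 else 0))"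
      using bal_sumW[OF Suc(2) fW] .
    also have "\<dots> \<le> 0"
      apply (rule sum_nonpos)
      using clos unfolding W_def by auto
    finally show False using e1 Suc(5) by simp
  qed
  then obtain w where "gwk (\<lambda>e. e \<in> F) src dst s w t" unfolding RF_def by auto
  from gwk_short[OF this] obtain q where q: "gwk (\<lambda>e. e \<in> F) src dst s q t" "distinct (map src q @ [t])"
    by blast
  have qne: "q \<noteq> []" using q(1) assms by (cases q) auto
  have qF: "set q \<subseteq> F" using gwk_ok[OF q(1)] by auto
  have qpath: "is_path E src dst s t q"
    unfolding is_path_gwk using qne q(2) gwk_mono[OF q(1), of "\<lambda>e. e \<in> E"] Suc(3) by auto
  define F' where "F' = F - set q"
  have balq: "bal src dst (set q) x = (if x = s then 1 else 0) - (if x = t then 1 else 0)" for x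
    using bal_path[OF q(1) q(2)] .
  have balF': "bal src dst F' x = bal src dst F x - ((if x = s then 1 else 0) - (if x = t then 1 else 0))" for x
    unfolding F'_def using bal_diff[OF Suc(2) qF, of src dst x] balq[of x] by simp
  have "\<exists>Q. finite Q \<and> card Q = m \<and> (\<forall>q\<in>Q. is_path E src dst s t q \<and> set q \<subseteq> F') \<and>
      (\<forall>p\<in>Q. \<forall>q\<in>Q. p \<noteq> q \<longrightarrow> set p \<inter> set q = {})"
    apply (rule Suc(1))
    using Suc(2-5) balF' assms unfolding F'_def by auto
  then obtain Q where Q: "finite Q" "card Q = m" "\<forall>q\<in>Q. is_path E src dst s t q \<and> set q \<subseteq> F'"
    "\<forall>p\<in>Q. \<forall>q\<in>Q. p \<noteq> q \<longrightarrow> set p \<inter> set q = {}" by blast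
  have qQ: "q \<notin> Q"
  proof
    assume "q \<in> Q"
    then have "set q \<subseteq> F'" using Q(3) by auto
    moreover obtain x where "x \<in> set q" using qne by (cases q) auto
    ultimately show False unfolding F'_def by blast
  qed
  have disj: "set q \<inter> set p = {}" if "p \<in> Q" for p
    using Q(3) that unfolding F'_def by auto
  show ?case
    apply (rule exI[of _ "insert q Q"])
    using Q qQ qpath qF disj unfolding F'_def by (auto simp: Int_commute)
qed




locale G =
  fixes E :: "'e set" and src dst :: "'e \<Rightarrow> 'v" and s t :: 'v and P :: "'e list set"
  assumes finE: "finite E" and maxP: "max_disjoint_paths E src dst s t P"
begin

definition U where "U = \<Union> (set ` P)"

lemma finP: "finite P" using maxP unfolding max_disjoint_paths_def by auto

lemma pathP: "p \<in> P \<Longrightarrow> is_path E src dst s t p"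
  using maxP unfolding max_disjoint_paths_def edge_disjoint_paths_def by auto

lemma disjP: "p \<in> P \<Longrightarrow> q \<in> P \<Longrightarrow> p \<noteq> q \<Longrightarrow> set p \<inter> set q = {}"
  using maxP unfolding max_disjoint_paths_def edge_disjoint_paths_def by auto

lemma maxcard: "finite Q \<Longrightarrow> edge_disjoint_paths E src dst s t Q \<Longrightarrow> card Q \<le> card P"
  using maxP unfolding max_disjoint_paths_def by auto

lemma pwk: "p \<in> P \<Longrightarrow> gwk (\<lambda>e. e \<in> E) src dst s p t \<and> distinct (map src p @ [t]) \<and> p \<noteq> []"
  using pathP is_path_gwk by metis

lemma pdist: "p \<in> P \<Longrightarrow> distinct p"
  using pwk[of p] by (auto simp: distinct_map)

lemma pE: "p \<in> P \<Longrightarrow> set p \<subseteq> E"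
  using pathP unfolding is_path_def by auto

lemma UE: "U \<subseteq> E" unfolding U_def using pE by auto

lemma finU: "finite U" using UE finE finite_subset by auto

lemma bal_U: "s \<noteq> t \<Longrightarrow> bal src dst U x = int (card P) * ((if x = s then 1 else 0) - (if x = t then 1 else 0))"
proof -
  assume st: "s \<noteq> t"
  have "bal src dst U x = (\<Sum>p\<in>P. bal src dst (set p) x)"
    unfolding U_def bal_def
    apply (rule sum.UNION_disjoint)
    using finP disjP by auto
  also have "\<dots> = (\<Sum>p\<in>P. (if x = s then 1 else 0) - (if x = t then 1 else 0))"
    apply (rule sum.cong[OF refl])
    using pwk bal_path by metis
  finally show ?thesis by simp
qed

definition okr :: "'e \<times> bool \<Rightarrow> bool" where
  "okr a = (if snd a then fst a \<in> E \<and> fst a \<notin> U else fst a \<in> U)"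
definition frr :: "'e \<times> bool \<Rightarrow> 'v" where
  "frr a = (if snd a then src (fst a) else dst (fst a))"
definition tgr :: "'e \<times> bool \<Rightarrow> 'v" where
  "tgr a = (if snd a then dst (fst a) else src (fst a))"

definition fw :: "('e \<times> bool) list \<Rightarrow> 'e set" where "fw w = {e. (e, True) \<in> set w}"
definition bw :: "('e \<times> bool) list \<Rightarrow> 'e set" where "bw w = {e. (e, False) \<in> set w}"

lemma fin_fw: "finite (fw w)"
proof -
  have "fw w \<subseteq> fst ` set w" unfolding fw_def by force
  then show ?thesis using finite_subset by blast
qed

lemma res_bal: "gwk okr frr tgr u w v \<Longrightarrow> distinct (map frr w @ [v]) \<Longrightarrow>
  bal src dst ((U - bw w) \<union> fw w) x = bal src dst U x + (if x = u then 1 else 0) - (if x = v then 1 else 0)"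
proof (induct w arbitrary: u)
  case Nil
  then show ?case unfolding fw_def bw_def by simp
next
  case (Cons a w)
  obtain e b where a: "a = (e, b)" by (cases a)
  have fin: "finite ((U - bw w) \<union> fw w)" using finU fin_fw by auto
  show ?case
  proof (cases b)
    case True
    have h: "e \<in> E" "e \<notin> U" "src e = u" "gwk okr frr tgr (dst e) w v"
      using Cons(2) a True unfolding okr_def frr_def tgr_def by auto
    have d: "distinct (map frr w @ [v])" "u \<notin> frr ` set w" "u \<noteq> v"
      using Cons(3) a True h unfolding frr_def by auto
    have "e \<notin> fw w"
    proof
      assume "e \<in> fw w"
      then have "(e, True) \<in> set w" unfolding fw_def by auto
      then have "u \<in> frr ` set w" using h unfolding frr_def by force
      then show False using d by simp
    qed
    then have nin: "e \<notin> (U - bw w) \<union> fw w" using h by auto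
    have eq: "(U - bw (a # w)) \<union> fw (a # w) = insert e ((U - bw w) \<union> fw w)"
      unfolding fw_def bw_def a using True by auto
    show ?thesis unfolding eq bal_insert[OF fin nin] Cons(1)[OF h(4) d(1)] using h by auto
  next
    case False
    have h: "e \<in> U" "dst e = u" "gwk okr frr tgr (src e) w v"
      using Cons(2) a False unfolding okr_def frr_def tgr_def by auto
    have d: "distinct (map frr w @ [v])" "u \<notin> frr ` set w" "u \<noteq> v"
      using Cons(3) a False h unfolding frr_def by auto
    have "e \<notin> bw w"
    proof
      assume "e \<in> bw w"
      then have "(e, False) \<in> set w" unfolding bw_def by auto
      then have "u \<in> frr ` set w" using h unfolding frr_def by force
      then show False using d by simp
    qed
    moreover have "e \<notin> fw w"
    proof
      assume "e \<in> fw w"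
      then have "(e, True) \<in> set w" unfolding fw_def by auto
      then have "okr (e, True)" using gwk_ok[OF h(3)] by blast
      then show False using h unfolding okr_def by auto
    qed
    ultimately have inn: "e \<in> (U - bw w) \<union> fw w" using h by auto
    have eq: "(U - bw (a # w)) \<union> fw (a # w) = ((U - bw w) \<union> fw w) - {e}"
      using False \<open>e \<notin> fw w\<close> unfolding fw_def bw_def a by auto
    show ?thesis unfolding eq bal_remove[OF fin inn] Cons(1)[OF h(3) d(1)] using h by auto
  qed
qed

definition R where "R = {v. \<exists>w. gwk okr frr tgr s w v}"

lemma R_step: "v \<in> R \<Longrightarrow> okr a \<Longrightarrow> frr a = v \<Longrightarrow> tgr a \<in> R"
proof -
  assume "v \<in> R" "okr a" "frr a = v"
  then obtain w where "gwk okr frr tgr s w v" unfolding R_def by auto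
  then have "gwk okr frr tgr s (w @ [a]) (tgr a)" using \<open>okr a\<close> \<open>frr a = v\<close> by (simp add: gwk_snoc)
  then show ?thesis unfolding R_def by blast
qed

lemma fwd_closed: "x \<in> E \<Longrightarrow> x \<notin> U \<Longrightarrow> src x \<in> R \<Longrightarrow> dst x \<in> R"
  using R_step[of "src x" "(x, True)"] unfolding okr_def frr_def tgr_def by auto

lemma back_closed: "x \<in> U \<Longrightarrow> dst x \<in> R \<Longrightarrow> src x \<in> R"
  using R_step[of "dst x" "(x, False)"] unfolding okr_def frr_def tgr_def by auto

lemma tR: "s \<noteq> t \<Longrightarrow> t \<notin> R"
proof
  assume st: "s \<noteq> t" and "t \<in> R"
  then obtain w0 where "gwk okr frr tgr s w0 t" unfolding R_def by auto
  from gwk_short[OF this] obtain w where w: "gwk okr frr tgr s w t" "distinct (map frr w @ [t])" by blast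
  define F where "F = (U - bw w) \<union> fw w"
  have finF: "finite F" unfolding F_def using finU fin_fw by auto
  have FE: "F \<subseteq> E"
  proof -
    have "fw w \<subseteq> E"
    proof
      fix e assume "e \<in> fw w"
      then have "(e, True) \<in> set w" unfolding fw_def by auto
      then have "okr (e, True)" using gwk_ok[OF w(1)] by blast
      then show "e \<in> E" unfolding okr_def by auto
    qed
    then show ?thesis unfolding F_def using UE by auto
  qed
  have balF: "bal src dst F x = bal src dst U x + (if x = s then 1 else 0) - (if x = t then 1 else 0)" for x
    unfolding F_def using res_bal[OF w] .
  have "\<exists>Q. finite Q \<and> card Q = Suc (card P) \<and> (\<forall>q\<in>Q. is_path E src dst s t q \<and> set q \<subseteq> F) \<and>
      (\<forall>p\<in>Q. \<forall>q\<in>Q. p \<noteq> q \<longrightarrow> set p \<inter> set q = {})"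
    apply (rule decomp[OF st finF FE])
    using balF bal_U[OF st] st by auto
  then obtain Q where Q: "finite Q" "card Q = Suc (card P)" "\<forall>q\<in>Q. is_path E src dst s t q"
    "\<forall>p\<in>Q. \<forall>q\<in>Q. p \<noteq> q \<longrightarrow> set p \<inter> set q = {}" by blast
  have "card Q \<le> card P" apply (rule maxcard[OF Q(1)]) unfolding edge_disjoint_paths_def using Q by auto
  then show False using Q(2) by simp
qed

lemma no_cross_back: "gwk (\<lambda>e. e \<in> E) src dst u c v \<Longrightarrow> set c \<subseteq> U \<Longrightarrow> u \<notin> R \<Longrightarrow> v \<in> R \<Longrightarrow> False"
  using gwk_cross[of "\<lambda>e. e \<in> E" src dst u c v "\<lambda>v. v \<notin> R"] back_closed by blast

lemma small_cut: "\<exists>X0. is_cut E src dst s t X0 \<and> card X0 \<le> card P"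
proof (cases "s = t")
  case True
  have "\<not> is_path E src dst s t p" for p
    using True unfolding is_path_def by (cases p) auto
  then have "is_cut E src dst s t {}" unfolding is_cut_def by auto
  then show ?thesis by auto
next
  case False
  define X0 where "X0 = {e \<in> E. src e \<in> R \<and> dst e \<notin> R}"
  have sR: "s \<in> R" unfolding R_def by (auto intro: exI[of _ "[]"])
  have cut: "is_cut E src dst s t X0"
    unfolding is_cut_def
  proof (intro conjI allI impI)
    show "X0 \<subseteq> E" unfolding X0_def by auto
    fix p assume "is_path E src dst s t p"
    then have "gwk (\<lambda>e. e \<in> E) src dst s p t" using is_path_gwk by metis
    from gwk_cross[OF this, of "\<lambda>v. v \<in> R"] sR tR[OF False] obtain x where
      "x \<in> set p" "src x \<in> R" "dst x \<notin> R" by blast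
    moreover have "x \<in> E" using gwk_ok[OF \<open>gwk _ _ _ s p t\<close> \<open>x \<in> set p\<close>] by simp
    ultimately show "set p \<inter> X0 \<noteq> {}" unfolding X0_def by auto
  qed
  have X0U: "X0 \<subseteq> U" unfolding X0_def using fwd_closed by blast
  have one: "card (X0 \<inter> set p) \<le> 1" if pP: "p \<in> P" for p
  proof -
    have "e1 = e2" if e: "e1 \<in> X0 \<inter> set p" "e2 \<in> X0 \<inter> set p" for e1 e2
    proof (rule ccontr)
      assume ne: "e1 \<noteq> e2"
      have pw: "gwk (\<lambda>e. e \<in> E) src dst s p t" using pwk[OF pP] by auto
      have pU: "set p \<subseteq> U" unfolding U_def using pP by auto
      obtain a b where ab: "p = a @ e1 # b" using e by (meson IntD2 split_list)
      have "e2 \<in> set a \<or> e2 \<in> set b" using ab e ne by auto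
      then show False
      proof
        assume "e2 \<in> set b"
        then obtain c d where "b = c @ e2 # d" by (meson split_list)
        then have "gwk (\<lambda>e. e \<in> E) src dst (dst e1) c (src e2)" using pw ab by (auto simp: gwk_append)
        moreover have "set c \<subseteq> U" using pU ab \<open>b = c @ e2 # d\<close> by auto
        ultimately show False using no_cross_back e unfolding X0_def by blast
      next
        assume "e2 \<in> set a"
        then obtain c d where "a = c @ e2 # d" by (meson split_list)
        then have "gwk (\<lambda>e. e \<in> E) src dst (dst e2) d (src e1)" using pw ab by (auto simp: gwk_append)
        moreover have "set d \<subseteq> U" using pU ab \<open>a = c @ e2 # d\<close> by auto
        ultimately show False using no_cross_back e unfolding X0_def by blast
      qed
    qed
    then show ?thesis by (simp add: card_le_Suc0_iff_eq)
  qed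
  have "X0 = (\<Union>p\<in>P. X0 \<inter> set p)" using X0U unfolding U_def by auto
  then have "card X0 = (\<Sum>p\<in>P. card (X0 \<inter> set p))"
    using card_UN_disjoint[of P "\<lambda>p. X0 \<inter> set p"] finP disjP by fastforce
  also have "\<dots> \<le> (\<Sum>p\<in>P. 1)" by (rule sum_mono) (use one in auto)
  finally show ?thesis using cut by auto
qed

end



lemma last_filter_idx: "m < length p \<Longrightarrow> Q (p ! m) \<Longrightarrow> (\<forall>i. m < i \<and> i < length p \<longrightarrow> \<not> Q (p ! i)) \<Longrightarrow>
  last (filter Q p) = p ! m"
proof -
  assume h: "m < length p" "Q (p ! m)" "\<forall>i. m < i \<and> i < length p \<longrightarrow> \<not> Q (p ! i)"
  have p: "p = take m p @ p ! m # drop (Suc m) p" using h(1) by (simp add: id_take_nth_drop)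
  have "filter Q (drop (Suc m) p) = []"
    using h(3) by (auto simp: filter_empty_conv in_set_conv_nth)
  then have "filter Q p = filter Q (take m p) @ [p ! m]"
    using h(2) by (subst p) simp
  then show ?thesis by simp
qed

lemma hd_filter_idx: "m < length p \<Longrightarrow> Q (p ! m) \<Longrightarrow> (\<forall>i. i < m \<longrightarrow> \<not> Q (p ! i)) \<Longrightarrow>
  hd (filter Q p) = p ! m"
proof -
  assume h: "m < length p" "Q (p ! m)" "\<forall>i. i < m \<longrightarrow> \<not> Q (p ! i)"
  have p: "p = take m p @ p ! m # drop (Suc m) p" using h(1) by (simp add: id_take_nth_drop)
  have "filter Q (take m p) = []"
    using h(3) h(1) by (auto simp: filter_empty_conv in_set_conv_nth)
  then have "filter Q p = p ! m # filter Q (drop (Suc m) p)"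
    using h(2) by (subst p) simp
  then show ?thesis by simp
qed

lemma choose2: "finite (I :: nat set) \<Longrightarrow> card {(i, j). i \<in> I \<and> j \<in> I \<and> i < j} = card I choose 2"
proof -
  assume fI: "finite I"
  let ?S = "{(i, j). i \<in> I \<and> j \<in> I \<and> i < j}"
  have inj: "inj_on (\<lambda>(i, j). {i, j}) ?S"
    unfolding inj_on_def by (auto simp: doubleton_eq_iff)
  have img: "(\<lambda>(i, j). {i, j}) ` ?S = {B. B \<subseteq> I \<and> card B = 2}"
  proof
    show "(\<lambda>(i, j). {i, j}) ` ?S \<subseteq> {B. B \<subseteq> I \<and> card B = 2}" by auto
    show "{B. B \<subseteq> I \<and> card B = 2} \<subseteq> (\<lambda>(i, j). {i, j}) ` ?S"
    proof
      fix B assume "B \<in> {B. B \<subseteq> I \<and> card B = 2}"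
      then obtain x y where B: "B = {x, y}" "x \<noteq> y" "B \<subseteq> I" by (auto simp: card_2_iff)
      show "B \<in> (\<lambda>(i, j). {i, j}) ` ?S"
      proof (cases "x < y")
        case True
        then show ?thesis using B by (auto intro!: image_eqI[of _ _ "(x, y)"])
      next
        case False
        then have "y < x" using B by auto
        then show ?thesis using B by (auto intro!: image_eqI[of _ _ "(y, x)"])
      qed
    qed
  qed
  have "card ?S = card ((\<lambda>(i, j). {i, j}) ` ?S)" using card_image[OF inj] by simp
  also have "\<dots> = card I choose 2" unfolding img using n_subsets[OF fI] by simp
  finally show ?thesis .
qed

lemma card_ind: "finite A \<Longrightarrow> card {x \<in> A. Q x} = (\<Sum>x\<in>A. if Q x then 1 else 0)"
  by (simp add: sum.If_cases Int_def)

lemma d_sum_pairs: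
  assumes fE: "finite E" and CE: "\<forall>i<length C. C ! i \<subseteq> E"
  shows "d_sum E C = (\<Sum>x\<in>{(i, j). i < j \<and> j < length C}. card (C ! fst x \<inter> C ! snd x))"
proof -
  define Pr where "Pr = {(i, j). i < j \<and> j < length C}"
  have fPr: "finite Pr"
  proof -
    have "Pr \<subseteq> {..<length C} \<times> {..<length C}" unfolding Pr_def by auto
    then show ?thesis using finite_subset by blast
  qed
  have "d_sum E C = (\<Sum>e\<in>E. mult C e choose 2)"
    unfolding d_sum_def E_shr_def
    apply (rule sum.mono_neutral_left[OF fE])
    by auto
  also have "\<dots> = (\<Sum>e\<in>E. \<Sum>x\<in>Pr. if e \<in> C ! fst x \<and> e \<in> C ! snd x then 1 else 0)"
  proof (rule sum.cong[OF refl])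
    fix e
    define I where "I = {i. i < length C \<and> e \<in> C ! i}"
    have fI: "finite I" unfolding I_def by auto
    have "mult C e = card I" unfolding mult_def I_def by (simp add: length_filter_conv_card)
    then have "mult C e choose 2 = card {(i, j). i \<in> I \<and> j \<in> I \<and> i < j}" using choose2[OF fI] by simp
    also have "{(i, j). i \<in> I \<and> j \<in> I \<and> i < j} = {x \<in> Pr. e \<in> C ! fst x \<and> e \<in> C ! snd x}"
      unfolding I_def Pr_def by auto
    also have "card \<dots> = (\<Sum>x\<in>Pr. if e \<in> C ! fst x \<and> e \<in> C ! snd x then 1 else 0)"
      by (rule card_ind[OF fPr])
    finally show "mult C e choose 2 = (\<Sum>x\<in>Pr. if e \<in> C ! fst x \<and> e \<in> C ! snd x then 1 else 0)" .
  qed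
  also have "\<dots> = (\<Sum>x\<in>Pr. \<Sum>e\<in>E. if e \<in> C ! fst x \<and> e \<in> C ! snd x then 1 else 0)"
    by (rule sum.swap)
  also have "\<dots> = (\<Sum>x\<in>Pr. card (C ! fst x \<inter> C ! snd x))"
  proof (rule sum.cong[OF refl])
    fix x assume "x \<in> Pr"
    then have "fst x < length C" unfolding Pr_def by auto
    then have "C ! fst x \<subseteq> E" using CE by auto
    then have "C ! fst x \<inter> C ! snd x = {e \<in> E. e \<in> C ! fst x \<and> e \<in> C ! snd x}" by auto
    then show "(\<Sum>e\<in>E. if e \<in> C ! fst x \<and> e \<in> C ! snd x then 1 else 0) = card (C ! fst x \<inter> C ! snd x)"
      using card_ind[OF fE] by simp
  qed
  finally show ?thesis unfolding Pr_def .
qed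

lemma arith_pair: "(a::nat) \<le> a' \<Longrightarrow> (b::nat) \<le> b' \<Longrightarrow>
  (if max a b = max a' b' then 1 else 0) + (if min a b = min a' b' then 1 else 0)
   \<le> (if a = a' then 1 else 0) + (if b = b' then (1::nat) else 0)"
  by (auto simp: max_def min_def)

context G
begin

lemma mincut_props:
  assumes X: "X \<in> min_cuts E src dst s t"
  shows "X \<subseteq> U \<and> (\<forall>p\<in>P. card (X \<inter> set p) = 1)"
proof -
  have cutX: "is_cut E src dst s t X" and minX: "\<And>Y. is_cut E src dst s t Y \<Longrightarrow> card X \<le> card Y"
    using X unfolding min_cuts_def by auto
  have XE: "X \<subseteq> E" using cutX unfolding is_cut_def by auto
  have fX: "finite X" using XE finE finite_subset by auto
  obtain X0 where "is_cut E src dst s t X0" "card X0 \<le> card P" using small_cut by blast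
  then have cX: "card X \<le> card P" using minX by force
  have ne: "X \<inter> set p \<noteq> {}" if "p \<in> P" for p
    using cutX pathP[OF that] unfolding is_cut_def by auto
  have ge1: "1 \<le> card (X \<inter> set p)" if "p \<in> P" for p
    using ne[OF that] fX by (simp add: Suc_le_eq card_gt_0_iff)
  have XU: "X \<inter> U = (\<Union>p\<in>P. X \<inter> set p)" unfolding U_def by auto
  then have cXU: "card (X \<inter> U) = (\<Sum>p\<in>P. card (X \<inter> set p))"
    using card_UN_disjoint[of P "\<lambda>p. X \<inter> set p"] finP disjP by fastforce
  have "card P = (\<Sum>p\<in>P. 1)" by simp
  also have "\<dots> \<le> (\<Sum>p\<in>P. card (X \<inter> set p))" by (rule sum_mono) (use ge1 in auto)
  finally have s1: "card P \<le> card (X \<inter> U)" using cXU by simp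
  have s2: "card (X \<inter> U) \<le> card X" using fX by (simp add: card_mono)
  have "X \<inter> U = X"
    apply (rule card_subset_eq[OF fX]) using s1 s2 cX by auto
  then have sub: "X \<subseteq> U" by auto
  have "card (X \<inter> set p) = 1" if pP: "p \<in> P" for p
  proof (rule ccontr)
    assume "card (X \<inter> set p) \<noteq> 1"
    then have g2: "2 \<le> card (X \<inter> set p)" using ge1[OF pP] by auto
    have "(\<Sum>q\<in>P. card (X \<inter> set q)) = card (X \<inter> set p) + (\<Sum>q\<in>P - {p}. card (X \<inter> set q))"
      using finP pP by (simp add: sum.remove)
    moreover have "(\<Sum>q\<in>P - {p}. card (X \<inter> set q)) \<ge> (\<Sum>q\<in>P - {p}. 1)" by (rule sum_mono) (use ge1 in auto)
    moreover have "(\<Sum>q\<in>P - {p}. (1::nat)) = card P - 1" using finP pP by simp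
    moreover have "card P \<ge> 1" using pP finP by (metis One_nat_def Suc_leI card_gt_0_iff empty_iff)
    ultimately show False using cXU s2 cX g2 by linarith
  qed
  then show ?thesis using sub by auto
qed

definition trv where "trv A \<longleftrightarrow> A \<subseteq> U \<and> (\<forall>p\<in>P. \<exists>i<length p. A \<inter> set p = {p ! i})"

lemma mincut_trv: "X \<in> min_cuts E src dst s t \<Longrightarrow> trv X"
proof -
  assume X: "X \<in> min_cuts E src dst s t"
  have "\<exists>i<length p. X \<inter> set p = {p ! i}" if "p \<in> P" for p
  proof -
    have "card (X \<inter> set p) = 1" using mincut_props[OF X] that by auto
    then obtain e where e: "X \<inter> set p = {e}" by (meson card_1_singletonE)
    then have "e \<in> set p" by auto
    then obtain i where "i < length p" "p ! i = e" by (auto simp: in_set_conv_nth)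
    then show ?thesis using e by auto
  qed
  then show ?thesis unfolding trv_def using mincut_props[OF X] by auto
qed

definition pos where "pos A p = (THE i. i < length p \<and> A \<inter> set p = {p ! i})"

lemma pos: "trv A \<Longrightarrow> p \<in> P \<Longrightarrow> pos A p < length p \<and> A \<inter> set p = {p ! pos A p}"
proof -
  assume A: "trv A" and pP: "p \<in> P"
  obtain i where i: "i < length p" "A \<inter> set p = {p ! i}" using A pP unfolding trv_def by auto
  have "pos A p = i" unfolding pos_def
  proof (rule the_equality)
    show "i < length p \<and> A \<inter> set p = {p ! i}" using i by auto
    fix j assume "j < length p \<and> A \<inter> set p = {p ! j}"
    then have "p ! j = p ! i" "j < length p" using i by auto
    then show "j = i" using nth_eq_iff_index_eq[OF pdist[OF pP]] i by auto
  qed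
  then show ?thesis using i by auto
qed

lemma pos_uniq: "trv A \<Longrightarrow> p \<in> P \<Longrightarrow> i < length p \<Longrightarrow> p ! i \<in> A \<Longrightarrow> i = pos A p"
proof -
  assume h: "trv A" "p \<in> P" "i < length p" "p ! i \<in> A"
  then have "p ! i \<in> A \<inter> set p" by auto
  then have "p ! i = p ! pos A p" using pos[OF h(1,2)] by auto
  then show ?thesis using nth_eq_iff_index_eq[OF pdist[OF h(2)]] h pos[OF h(1,2)] by auto
qed

lemma trvE: "trv A \<Longrightarrow> A \<subseteq> E" unfolding trv_def using UE by auto

lemma card_inter: "trv A \<Longrightarrow> trv B \<Longrightarrow> card (A \<inter> B) = (\<Sum>p\<in>P. if pos A p = pos B p then 1 else 0)"
proof -
  assume A: "trv A" and B: "trv B"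
  have "A \<inter> B = (\<Union>p\<in>P. A \<inter> B \<inter> set p)" using A unfolding trv_def U_def by auto
  then have "card (A \<inter> B) = (\<Sum>p\<in>P. card (A \<inter> B \<inter> set p))"
    using card_UN_disjoint[of P "\<lambda>p. A \<inter> B \<inter> set p"] finP disjP by fastforce
  also have "\<dots> = (\<Sum>p\<in>P. if pos A p = pos B p then 1 else 0)"
  proof (rule sum.cong[OF refl])
    fix p assume pP: "p \<in> P"
    have "A \<inter> B \<inter> set p = (A \<inter> set p) \<inter> (B \<inter> set p)" by auto
    also have "\<dots> = {p ! pos A p} \<inter> {p ! pos B p}" using pos[OF A pP] pos[OF B pP] by simp
    finally have eq: "A \<inter> B \<inter> set p = {p ! pos A p} \<inter> {p ! pos B p}" .
    have "(p ! pos A p = p ! pos B p) = (pos A p = pos B p)"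
      using nth_eq_iff_index_eq[OF pdist[OF pP]] pos[OF A pP] pos[OF B pP] by auto
    then show "card (A \<inter> B \<inter> set p) = (if pos A p = pos B p then 1 else 0)"
      unfolding eq by auto
  qed
  finally show ?thesis .
qed

lemma img_trv:
  assumes f: "\<forall>q\<in>P. f q < length q"
  shows "trv ((\<lambda>q. q ! f q) ` P) \<and> (\<forall>p\<in>P. pos ((\<lambda>q. q ! f q) ` P) p = f p)"
proof -
  let ?A = "(\<lambda>q. q ! f q) ` P"
  have int: "?A \<inter> set p = {p ! f p}" if pP: "p \<in> P" for p
  proof
    show "{p ! f p} \<subseteq> ?A \<inter> set p" using pP f by auto
    show "?A \<inter> set p \<subseteq> {p ! f p}"
    proof
      fix e assume "e \<in> ?A \<inter> set p"
      then obtain q where q: "q \<in> P" "e = q ! f q" "e \<in> set p" by auto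
      have "e \<in> set q" using q f by auto
      then have "q = p" using disjP[OF q(1) pP] q by auto
      then show "e \<in> {p ! f p}" using q by auto
    qed
  qed
  have tr: "trv ?A" unfolding trv_def U_def using f int by force
  have "pos ?A p = f p" if pP: "p \<in> P" for p
    using pos_uniq[OF tr pP, of "f p"] f pP by auto
  then show ?thesis using tr by auto
qed

lemma smax: "trv X \<Longrightarrow> trv Y \<Longrightarrow> S_max P (X \<union> Y) = (\<lambda>q. q ! max (pos X q) (pos Y q)) ` P"
  unfolding S_max_def
proof (rule image_cong[OF refl])
  fix q assume X: "trv X" and Y: "trv Y" and qP: "q \<in> P"
  have iff: "q ! i \<in> X \<union> Y \<longleftrightarrow> i = pos X q \<or> i = pos Y q" if "i < length q" for i
    using pos_uniq[OF X qP that] pos_uniq[OF Y qP that] pos[OF X qP] pos[OF Y qP] by auto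
  show "last (filter (\<lambda>e. e \<in> X \<union> Y) q) = q ! max (pos X q) (pos Y q)"
    apply (rule last_filter_idx)
    using iff pos[OF X qP] pos[OF Y qP] by (auto simp: max_def)
qed

lemma smin: "trv X \<Longrightarrow> trv Y \<Longrightarrow> S_min P (X \<union> Y) = (\<lambda>q. q ! min (pos X q) (pos Y q)) ` P"
  unfolding S_min_def
proof (rule image_cong[OF refl])
  fix q assume X: "trv X" and Y: "trv Y" and qP: "q \<in> P"
  have iff: "q ! i \<in> X \<union> Y \<longleftrightarrow> i = pos X q \<or> i = pos Y q" if "i < length q" for i
    using pos_uniq[OF X qP that] pos_uniq[OF Y qP that] pos[OF X qP] pos[OF Y qP] by auto
  show "hd (filter (\<lambda>e. e \<in> X \<union> Y) q) = q ! min (pos X q) (pos Y q)"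
  proof (rule hd_filter_idx)
    show "min (pos X q) (pos Y q) < length q" using pos[OF X qP] pos[OF Y qP] by auto
    then show "q ! min (pos X q) (pos Y q) \<in> X \<union> Y" using iff by (auto simp: min_def)
    show "\<forall>i<min (pos X q) (pos Y q). q ! i \<notin> X \<union> Y"
    proof (intro allI impI)
      fix i assume i: "i < min (pos X q) (pos Y q)"
      then have "i < length q" using pos[OF X qP] by auto
      then show "q ! i \<notin> X \<union> Y" using iff[OF \<open>i < length q\<close>] i by auto
    qed
  qed
qed

lemma pos_le: "trv X \<Longrightarrow> trv Y \<Longrightarrow> cut_le E src dst s t X Y \<Longrightarrow> p \<in> P \<Longrightarrow> pos X p \<le> pos Y p"
proof -
  assume X: "trv X" and Y: "trv Y" and le: "cut_le E src dst s t X Y" and pP: "p \<in> P"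
  obtain i j where ij: "i \<le> j" "j < length p" "p ! i \<in> X" "p ! j \<in> Y"
    using le pathP[OF pP] unfolding cut_le_def by blast
  have "i = pos X p" using pos_uniq[OF X pP _ ij(3)] ij by auto
  moreover have "j = pos Y p" using pos_uniq[OF Y pP ij(2) ij(4)] .
  ultimately show ?thesis using ij by auto
qed

end



theorem theorem6:
  fixes E :: "'e set" and src dst :: "'e \<Rightarrow> 'v" and s t :: 'v and k :: nat
    and P :: "'e list set" and C1 C2 :: "'e set list"
  assumes "finite E"
    and "k \<ge> 1"
    and "max_disjoint_paths E src dst s t P"
    and "C1 \<in> U_lr E src dst s t k"
    and "C2 \<in> U_lr E src dst s t k"
  shows "d_sum E (tuple_join P C1 C2) + d_sum E (tuple_meet P C1 C2)
           \<le> d_sum E C1 + d_sum E C2"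
proof -
  interpret G E src dst s t P using assms(1,3) by unfold_locales
  have l1: "length C1 = k" and m1: "\<And>i. i < k \<Longrightarrow> C1 ! i \<in> min_cuts E src dst s t"
    and o1: "\<And>i j. i < j \<Longrightarrow> j < k \<Longrightarrow> cut_le E src dst s t (C1 ! i) (C1 ! j)"
    using assms(4) unfolding U_lr_def by auto
  have l2: "length C2 = k" and m2: "\<And>i. i < k \<Longrightarrow> C2 ! i \<in> min_cuts E src dst s t"
    and o2: "\<And>i j. i < j \<Longrightarrow> j < k \<Longrightarrow> cut_le E src dst s t (C2 ! i) (C2 ! j)"
    using assms(5) unfolding U_lr_def by auto
  have t1: "\<And>i. i < k \<Longrightarrow> trv (C1 ! i)" using m1 mincut_trv by blast
  have t2: "\<And>i. i < k \<Longrightarrow> trv (C2 ! i)" using m2 mincut_trv by blast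
  define J where "J = tuple_join P C1 C2"
  define M where "M = tuple_meet P C1 C2"
  have lJ: "length J = k" unfolding J_def tuple_join_def using l1 l2 by simp
  have lM: "length M = k" unfolding M_def tuple_meet_def using l1 l2 by simp
  define fJ where "fJ i q = max (pos (C1 ! i) q) (pos (C2 ! i) q)" for i q
  define fM where "fM i q = min (pos (C1 ! i) q) (pos (C2 ! i) q)" for i q
  have Jn: "J ! i = (\<lambda>q. q ! fJ i q) ` P" if "i < k" for i
    unfolding J_def tuple_join_def fJ_def using that l1 l2 smax[OF t1[OF that] t2[OF that]] by simp
  have Mn: "M ! i = (\<lambda>q. q ! fM i q) ` P" if "i < k" for i
    unfolding M_def tuple_meet_def fM_def using that l1 l2 smin[OF t1[OF that] t2[OF that]] by simp
  have fJl: "\<forall>q\<in>P. fJ i q < length q" if "i < k" for i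
    unfolding fJ_def using pos[OF t1[OF that]] pos[OF t2[OF that]] by auto
  have fMl: "\<forall>q\<in>P. fM i q < length q" if "i < k" for i
    unfolding fM_def using pos[OF t1[OF that]] pos[OF t2[OF that]] by (auto simp: min_def)
  have tJ: "trv (J ! i)" and pJ: "\<And>p. p \<in> P \<Longrightarrow> pos (J ! i) p = fJ i p" if "i < k" for i
    using img_trv[OF fJl[OF that]] Jn[OF that] by auto
  have tM: "trv (M ! i)" and pM: "\<And>p. p \<in> P \<Longrightarrow> pos (M ! i) p = fM i p" if "i < k" for i
    using img_trv[OF fMl[OF that]] Mn[OF that] by auto
  define Pr where "Pr = {(i, j). i < j \<and> j < k}"
  have dJ: "d_sum E J = (\<Sum>x\<in>Pr. card (J ! fst x \<inter> J ! snd x))"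
    unfolding Pr_def using d_sum_pairs[OF assms(1), of J] lJ tJ trvE by auto
  have dM: "d_sum E M = (\<Sum>x\<in>Pr. card (M ! fst x \<inter> M ! snd x))"
    unfolding Pr_def using d_sum_pairs[OF assms(1), of M] lM tM trvE by auto
  have d1: "d_sum E C1 = (\<Sum>x\<in>Pr. card (C1 ! fst x \<inter> C1 ! snd x))"
    unfolding Pr_def using d_sum_pairs[OF assms(1), of C1] l1 t1 trvE by auto
  have d2: "d_sum E C2 = (\<Sum>x\<in>Pr. card (C2 ! fst x \<inter> C2 ! snd x))"
    unfolding Pr_def using d_sum_pairs[OF assms(1), of C2] l2 t2 trvE by auto
  have pair: "card (J ! i \<inter> J ! j) + card (M ! i \<inter> M ! j) \<le> card (C1 ! i \<inter> C1 ! j) + card (C2 ! i \<inter> C2 ! j)"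
    if ij: "i < j" "j < k" for i j
  proof -
    have ik: "i < k" using ij by auto
    have "card (J ! i \<inter> J ! j) + card (M ! i \<inter> M ! j) =
      (\<Sum>p\<in>P. (if fJ i p = fJ j p then 1 else 0) + (if fM i p = fM j p then 1 else 0))"
      unfolding card_inter[OF tJ[OF ik] tJ[OF ij(2)]] card_inter[OF tM[OF ik] tM[OF ij(2)]] sum.distrib
      using pJ[OF ik] pJ[OF ij(2)] pM[OF ik] pM[OF ij(2)] by simp
    also have "\<dots> \<le> (\<Sum>p\<in>P. (if pos (C1 ! i) p = pos (C1 ! j) p then 1 else 0) +
                         (if pos (C2 ! i) p = pos (C2 ! j) p then 1 else 0))"
    proof (rule sum_mono)
      fix p assume pP: "p \<in> P"
      have a: "pos (C1 ! i) p \<le> pos (C1 ! j) p" using pos_le[OF t1[OF ik] t1[OF ij(2)] o1[OF ij] pP] .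
      have b: "pos (C2 ! i) p \<le> pos (C2 ! j) p" using pos_le[OF t2[OF ik] t2[OF ij(2)] o2[OF ij] pP] .
      show "(if fJ i p = fJ j p then 1 else 0) + (if fM i p = fM j p then 1 else 0)
        \<le> (if pos (C1 ! i) p = pos (C1 ! j) p then 1 else 0) + (if pos (C2 ! i) p = pos (C2 ! j) p then (1::nat) else 0)"
        unfolding fJ_def fM_def by (rule arith_pair[OF a b])
    qed
    also have "\<dots> = card (C1 ! i \<inter> C1 ! j) + card (C2 ! i \<inter> C2 ! j)"
      unfolding card_inter[OF t1[OF ik] t1[OF ij(2)]] card_inter[OF t2[OF ik] t2[OF ij(2)]] sum.distrib ..
    finally show ?thesis .
  qed
  have "d_sum E J + d_sum E M \<le> d_sum E C1 + d_sum E C2"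
    unfolding dJ dM d1 d2 sum.distrib[symmetric]
    apply (rule sum_mono)
    using pair unfolding Pr_def by auto
  then show ?thesis unfolding J_def M_def .
qed


end
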